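(* Let $X$ be a Tychonoff space. The following are equivalent: (1) $(C(X),\tau_\Gamma)$ is second countable; (2) $(C(X),\tau_\Gamma)$ has a countable network; (3) $(C(X),\tau_\Gamma)$ is separable; (4) $(C(X),\tau_\Gamma)$ has the countable chain condition; (5) $X$ is compact and metrizable.
   Context: $C(X)$ is the set of continuous real-valued functions on $X$, each identified with its graph in $X\times\mathbb{R}$. The graph topology $\tau_\Gamma$ on $C(X)$ has base $\{F_G: G\text{ open in }X\times\mathbb{R}\}$ where $F_G=\{f\in C(X): f\subset G\}$. *)

theory Defs
  imports "HOL-Analysis.Analysis"
begin

definition tychonoff_space :: "'a topology \<Rightarrow> bool" where
  "tychonoff_space X \<equiv> completely_regular_space X \<and> t1_space X"

definition fgraph :: "'a topology \<Rightarrow> ('a \<Rightarrow> real) \<Rightarrow> ('a \<times> real) set" where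
  "fgraph X f = {(x, f x) | x. x \<in> topspace X}"

text \<open>C(X): continuous real-valued functions on X, identified with their graphs.\<close>
definition CX :: "'a topology \<Rightarrow> ('a \<times> real) set set" where
  "CX X = {fgraph X f | f. continuous_map X euclideanreal f}"

definition FG :: "'a topology \<Rightarrow> ('a \<times> real) set \<Rightarrow> ('a \<times> real) set set" where
  "FG X G = {g \<in> CX X. g \<subseteq> G}"

definition graph_topology :: "'a topology \<Rightarrow> ('a \<times> real) set topology" where
  "graph_topology X =
     topology_generated_by {FG X G | G. openin (prod_topology X euclideanreal) G}"

definition has_countable_network :: "'a topology \<Rightarrow> bool" where
  "has_countable_network T \<equiv>
     \<exists>\<N>. countable \<N> \<and> (\<forall>N\<in>\<N>. N \<subseteq> topspace T) \<and>
         (\<forall>U x. openin T U \<and> x \<in> U \<longrightarrow> (\<exists>N\<in>\<N>. x \<in> N \<and> N \<subseteq> U))"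

definition ccc_space :: "'a topology \<Rightarrow> bool" where
  "ccc_space T \<equiv>
     \<forall>\<U>. (\<forall>U\<in>\<U>. openin T U \<and> U \<noteq> {}) \<and> pairwise disjnt \<U> \<longrightarrow> countable \<U>"

end

theory Submission
  imports Defs
begin

lemma fgraph_sub: "fgraph X f \<subseteq> topspace X \<times> UNIV"
  by (auto simp: fgraph_def)

lemma fgraph_in_CX: "continuous_map X euclideanreal f \<Longrightarrow> fgraph X f \<in> CX X"
  by (auto simp: CX_def)

lemma FG_open:
  assumes "openin (prod_topology X euclideanreal) G"
  shows "openin (graph_topology X) (FG X G)"
  unfolding graph_topology_def openin_topology_generated_by_iff
  using assms by (auto intro: generate_topology_on.Basis)

lemma FG_Int: "FG X (G1 \<inter> G2) = FG X G1 \<inter> FG X G2"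
  by (auto simp: FG_def)

lemma FG_mono: "G1 \<subseteq> G2 \<Longrightarrow> FG X G1 \<subseteq> FG X G2"
  by (auto simp: FG_def)

lemma topspace_gt: "topspace (graph_topology X) = CX X"
proof -
  have e: "FG X (topspace (prod_topology X euclideanreal)) = CX X"
    by (auto simp: FG_def CX_def fgraph_def)
  have "\<Union>{FG X G | G. openin (prod_topology X euclideanreal) G} = CX X"
  proof
    show "\<Union>{FG X G | G. openin (prod_topology X euclideanreal) G} \<subseteq> CX X"
      by (auto simp: FG_def)
    show "CX X \<subseteq> \<Union>{FG X G | G. openin (prod_topology X euclideanreal) G}"
      using e by blast
  qed
  then show ?thesis
    unfolding graph_topology_def topology_generated_by_topspace .
qed

lemma gt_base:
  assumes "openin (graph_topology X) U" "h \<in> U"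
  shows "\<exists>G. openin (prod_topology X euclideanreal) G \<and> h \<in> FG X G \<and> FG X G \<subseteq> U"
proof -
  have "generate_topology_on {FG X G | G. openin (prod_topology X euclideanreal) G} U"
    using assms(1) unfolding graph_topology_def openin_topology_generated_by_iff .
  then show ?thesis using assms(2)
  proof (induction arbitrary: h)
    case Empty
    then show ?case by simp
  next
    case (Int a b)
    from Int.prems have ha: "h \<in> a" and hb: "h \<in> b" by auto
    obtain G1 where G1: "openin (prod_topology X euclideanreal) G1" "h \<in> FG X G1" "FG X G1 \<subseteq> a"
      using Int.IH(1)[OF ha] by (elim exE conjE)
    obtain G2 where G2: "openin (prod_topology X euclideanreal) G2" "h \<in> FG X G2" "FG X G2 \<subseteq> b"
      using Int.IH(2)[OF hb] by (elim exE conjE)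
    have "openin (prod_topology X euclideanreal) (G1 \<inter> G2)" using G1(1) G2(1) by (rule openin_Int)
    moreover have "h \<in> FG X (G1 \<inter> G2)" using G1(2) G2(2) by (simp add: FG_Int)
    moreover have "FG X (G1 \<inter> G2) \<subseteq> a \<inter> b" using G1(3) G2(3) by (auto simp: FG_Int)
    ultimately show ?case by blast
  next
    case (UN K)
    then obtain k where "k \<in> K" "h \<in> k" by blast
    with UN.IH[OF this] show ?case by blast
  next
    case (Basis s)
    then show ?case by blast
  qed
qed

lemma sep_countable:
  assumes ccc: "ccc_space (graph_topology X)" and c: "c > 0"
    and F: "\<And>f. f \<in> F \<Longrightarrow> continuous_map X euclideanreal f"
    and sep: "\<And>f g. f \<in> F \<Longrightarrow> g \<in> F \<Longrightarrow> f \<noteq> g \<Longrightarrow> \<exists>x\<in>topspace X. c \<le> \<bar>f x - g x\<bar>"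
  shows "countable F"
proof -
  define T where "T f = {p \<in> topspace (prod_topology X euclideanreal). \<bar>snd p - f (fst p)\<bar> \<in> {..<c/2}}" for f
  define N where "N f = FG X (T f)" for f
  have openT: "openin (prod_topology X euclideanreal) (T f)" if "f \<in> F" for f
  proof -
    have "continuous_map (prod_topology X euclideanreal) euclideanreal (\<lambda>p. f (fst p))"
      using continuous_map_compose[OF continuous_map_fst F[OF that]] by (simp add: o_def)
    then have "continuous_map (prod_topology X euclideanreal) euclideanreal (\<lambda>p. \<bar>snd p - f (fst p)\<bar>)"
      by (intro continuous_map_real_abs continuous_map_diff continuous_map_snd) auto
    then show ?thesis unfolding T_def
      by (rule openin_continuous_map_preimage) auto
  qed
  have graph_in: "fgraph X f \<in> N f" if "f \<in> F" for f
    using fgraph_in_CX[OF F[OF that]] c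
    by (auto simp: N_def FG_def T_def fgraph_def)
  have disj: "N f \<inter> N g = {}" if fgF: "f \<in> F" "g \<in> F" "f \<noteq> g" for f g
  proof (rule ccontr)
    assume "N f \<inter> N g \<noteq> {}"
    then obtain h where h: "h \<in> N f" "h \<in> N g" by blast
    then obtain k where k: "h = fgraph X k" by (auto simp: N_def FG_def CX_def)
    obtain x where x: "x \<in> topspace X" "c \<le> \<bar>f x - g x\<bar>" using sep[OF fgF] by blast
    have "(x, k x) \<in> h" using k x by (auto simp: fgraph_def)
    then have "(x, k x) \<in> T f" "(x, k x) \<in> T g" using h by (auto simp: N_def FG_def)
    then have "\<bar>k x - f x\<bar> < c/2" "\<bar>k x - g x\<bar> < c/2" by (auto simp: T_def)
    then show False using x by linarith
  qed
  have inj: "inj_on N F"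
  proof (rule inj_onI, rule ccontr)
    fix f g assume "f \<in> F" "g \<in> F" "N f = N g" "f \<noteq> g"
    then show False using disj[of f g] graph_in[of f] by auto
  qed
  have "countable (N ` F)"
  proof -
    have "openin (graph_topology X) (N f) \<and> N f \<noteq> {}" if "f \<in> F" for f
      using FG_open[OF openT[OF that]] graph_in[OF that] unfolding N_def by auto
    then have "\<forall>U\<in>N ` F. openin (graph_topology X) U \<and> U \<noteq> {}" by blast
    moreover have "pairwise disjnt (N ` F)"
      unfolding pairwise_def disjnt_def using disj by auto
    ultimately show ?thesis using ccc unfolding ccc_space_def by blast
  qed
  then show ?thesis using inj countable_image_inj_on by blast
qed

lemma exists_net:
  assumes ccc: "ccc_space (graph_topology X)"
  obtains M where "countable M" "\<And>f. f \<in> M \<Longrightarrow> continuous_map X euclideanreal f"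
    "\<And>g. continuous_map X euclideanreal g \<Longrightarrow> \<exists>f\<in>M. \<forall>x\<in>topspace X. \<bar>f x - g x\<bar> < 1/3"
proof -
  define S where "S = {g. continuous_map X euclideanreal g}"
  define sepf where "sepf M \<longleftrightarrow> M \<subseteq> S \<and> (\<forall>f\<in>M. \<forall>g\<in>M. f \<noteq> g \<longrightarrow> (\<exists>x\<in>topspace X. 1/3 \<le> \<bar>f x - g x\<bar>))" for M
  have "\<exists>M\<in>Collect sepf. \<forall>Y\<in>Collect sepf. M \<subseteq> Y \<longrightarrow> Y = M"
  proof (rule Zorn_Lemma, intro ballI)
    fix C assume C: "C \<in> chains (Collect sepf)"
    then have C1: "\<And>A. A \<in> C \<Longrightarrow> sepf A" and C2: "\<And>A B. A \<in> C \<Longrightarrow> B \<in> C \<Longrightarrow> A \<subseteq> B \<or> B \<subseteq> A"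
      by (auto simp: chains_def chain_subset_def)
    have "sepf (\<Union>C)"
      unfolding sepf_def
    proof (intro conjI ballI impI)
      show "\<Union>C \<subseteq> S" using C1 by (auto simp: sepf_def)
      fix f g assume f: "f \<in> \<Union>C" and g: "g \<in> \<Union>C" and fg: "f \<noteq> g"
      then obtain A B where AB: "A \<in> C" "B \<in> C" "f \<in> A" "g \<in> B" by blast
      from C2[OF AB(1,2)] show "\<exists>x\<in>topspace X. 1/3 \<le> \<bar>f x - g x\<bar>"
      proof
        assume "A \<subseteq> B" then show ?thesis using C1[OF AB(2)] AB fg by (auto simp: sepf_def)
      next
        assume "B \<subseteq> A" then show ?thesis using C1[OF AB(1)] AB fg by (auto simp: sepf_def)
      qed
    qed
    then show "\<Union>C \<in> Collect sepf" by simp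
  qed
  then obtain M where sepM: "sepf M" and max: "\<And>Y. sepf Y \<Longrightarrow> M \<subseteq> Y \<Longrightarrow> Y = M"
    by blast
  have contM: "\<And>f. f \<in> M \<Longrightarrow> continuous_map X euclideanreal f"
    using sepM by (auto simp: sepf_def S_def)
  have "countable M"
    by (rule sep_countable[OF ccc, of "1/3"]) (use sepM contM in \<open>auto simp: sepf_def\<close>)
  moreover have "\<exists>f\<in>M. \<forall>x\<in>topspace X. \<bar>f x - g x\<bar> < 1/3"
    if g: "continuous_map X euclideanreal g" for g
  proof (cases "g \<in> M")
    case True then show ?thesis by (intro bexI[of _ g]) auto
  next
    case False
    have "\<not> sepf (insert g M)"
      using max[of "insert g M"] False by auto
    then obtain f1 g1 where fg: "f1 \<in> insert g M" "g1 \<in> insert g M" "f1 \<noteq> g1"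
      "\<forall>x\<in>topspace X. \<bar>f1 x - g1 x\<bar> < 1/3"
      using sepM g unfolding sepf_def S_def by (auto simp: not_le)
    show ?thesis
    proof (cases "f1 = g")
      case True
      then have "g1 \<in> M" using fg by auto
      then show ?thesis using fg True by (intro bexI[of _ g1]) (auto simp: abs_minus_commute)
    next
      case False
      then have f1M: "f1 \<in> M" using fg by auto
      have "g1 = g"
      proof (rule ccontr)
        assume "g1 \<noteq> g"
        then have "g1 \<in> M" using fg by auto
        then have "\<exists>x\<in>topspace X. 1/3 \<le> \<bar>f1 x - g1 x\<bar>"
          using sepM f1M fg(3) unfolding sepf_def by blast
        then show False using fg(4) by force
      qed
      then show ?thesis using fg f1M by auto
    qed
  qed
  ultimately show ?thesis using that contM by blast
qed

lemma net_metrizable: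
  assumes cr: "completely_regular_space X" and t1: "t1_space X" and cM: "countable M"
    and contM: "\<And>f. f \<in> M \<Longrightarrow> continuous_map X euclideanreal f"
    and net: "\<And>g. continuous_map X euclideanreal g \<Longrightarrow> \<exists>f\<in>M. \<forall>x\<in>topspace X. \<bar>f x - g x\<bar> < 1/3"
  shows "metrizable_space X"
proof -
  define Y where "Y = product_topology (\<lambda>_. euclideanreal) M"
  define e where "e x = (\<lambda>f\<in>M. f x)" for x
  define Z where "Z = subtopology Y (e ` topspace X)"
  have contY: "continuous_map X Y e"
    unfolding Y_def continuous_map_componentwise e_def using contM by auto
  have contZ: "continuous_map X Z e" unfolding Z_def using contY
    by (simp add: continuous_map_in_subtopology)
  have ury: "\<exists>f\<in>M. f x < 1/3 \<and> (\<forall>y\<in>topspace X - U. f y > 2/3)" if U: "openin X U" "x \<in> U" for U x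
  proof -
    have xt: "x \<in> topspace X" using U openin_subset by fastforce
    have cl: "closedin X (topspace X - U)" using U by auto
    have xin: "x \<in> topspace X - (topspace X - U)" using U xt by blast
    obtain g :: "_ \<Rightarrow> real" where g: "continuous_map X (top_of_set {0..1}) g" "g x = 0" "g ` (topspace X - U) \<subseteq> {1}"
      using cr[unfolded completely_regular_space_def, rule_format, OF conjI[OF cl xin]] by blast
    have "continuous_map X euclideanreal g" using g(1) by (simp add: continuous_map_in_subtopology)
    then obtain f where f: "f \<in> M" "\<forall>y\<in>topspace X. \<bar>f y - g y\<bar> < 1/3" using net by blast
    have "f x < 1/3" using f(2) xt g(2) by force
    moreover have "\<forall>y\<in>topspace X - U. f y > 2/3"
    proof
      fix y assume y: "y \<in> topspace X - U"
      then have "g y = 1" using g(3) by blast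
      moreover have "\<bar>f y - g y\<bar> < 1/3" using f(2) y by blast
      ultimately show "f y > 2/3" by arith
    qed
    ultimately show ?thesis using f(1) by blast
  qed
  have inj: "inj_on e (topspace X)"
  proof (rule inj_onI, rule ccontr)
    fix x y assume xy: "x \<in> topspace X" "y \<in> topspace X" "e x = e y" "x \<noteq> y"
    have "closedin X {y}" using t1 xy by (simp add: t1_space_closedin_singleton)
    then have "openin X (topspace X - {y})" by (simp add: closedin_def)
    then obtain f where f: "f \<in> M" "f x < 1/3" "f y > 2/3" using ury[of "topspace X - {y}" x] xy by auto
    moreover have "e x f = f x" "e y f = f y" using f(1) by (auto simp: e_def)
    ultimately show False using xy(3) by auto
  qed
  have om: "open_map X Z e"
    unfolding open_map_def
  proof (intro allI impI)
    fix U assume U: "openin X U"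
    have "\<forall>x\<in>U. \<exists>f\<in>M. f x < 1/3 \<and> (\<forall>y\<in>topspace X - U. f y > 2/3)"
      using ury U by blast
    then obtain \<phi> where \<phi>: "\<And>x. x \<in> U \<Longrightarrow> \<phi> x \<in> M \<and> \<phi> x x < 1/3 \<and> (\<forall>y\<in>topspace X - U. \<phi> x y > 2/3)"
      by metis
    define W where "W x = PiE M (\<lambda>h. if h = \<phi> x then {..<1/2::real} else UNIV)" for x
    have openW: "openin Y (W x)" for x
    proof -
      have "finite {i \<in> M. (if i = \<phi> x then {..<1/2::real} else UNIV) \<noteq> topspace euclideanreal}"
        by (rule finite_subset[of _ "{\<phi> x}"]) auto
      then show ?thesis unfolding Y_def W_def openin_PiE_gen by auto
    qed
    have Ut: "U \<subseteq> topspace X" using U openin_subset by blast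
    have "e ` U = (\<Union>x\<in>U. W x) \<inter> e ` topspace X"
    proof
      show "e ` U \<subseteq> (\<Union>x\<in>U. W x) \<inter> e ` topspace X"
      proof
        fix z assume "z \<in> e ` U"
        then obtain x where x: "x \<in> U" "z = e x" by blast
        have "e x \<in> W x" using \<phi>[OF x(1)] by (auto simp: W_def e_def PiE_iff)
        then show "z \<in> (\<Union>x\<in>U. W x) \<inter> e ` topspace X" using x Ut by blast
      qed
      show "(\<Union>x\<in>U. W x) \<inter> e ` topspace X \<subseteq> e ` U"
      proof
        fix z assume "z \<in> (\<Union>x\<in>U. W x) \<inter> e ` topspace X"
        then obtain x y where xy: "x \<in> U" "z \<in> W x" "y \<in> topspace X" "z = e y" by blast
        then have "e y (\<phi> x) < 1/2" unfolding W_def using \<phi>[OF xy(1)] by (auto simp: PiE_iff)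
        then have "\<phi> x y < 1/2" using \<phi>[OF xy(1)] by (simp add: e_def)
        then have "y \<in> U" using \<phi>[OF xy(1)] xy(3) by force
        then show "z \<in> e ` U" using xy by blast
      qed
    qed
    moreover have "openin Y (\<Union>x\<in>U. W x)" using openW by blast
    ultimately show "openin Z (e ` U)" unfolding Z_def openin_subtopology by blast
  qed
  have emb: "embedding_map X Z e" using injective_open_imp_embedding_map[OF contZ om inj] .
  have "metrizable_space Y"
    unfolding Y_def metrizable_space_product_topology
    by (rule disjI2) (auto intro: countable_subset[OF _ cM] simp: metrizable_space_euclidean)
  then have "metrizable_space (subtopology Z (e ` topspace X))"
    unfolding Z_def by (intro metrizable_space_subtopology)
  then show ?thesis
    using embedding_map_imp_homeomorphic_space[OF emb] homeomorphic_metrizable_space by blast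
qed

lemma uncountable_nat_sets: "uncountable (UNIV :: nat set set)"
proof
  assume "countable (UNIV :: nat set set)"
  then obtain g :: "nat \<Rightarrow> nat set" where g: "range g = UNIV"
    using range_from_nat_into[of "UNIV :: nat set set"] by blast
  have "{m. m \<notin> g m} \<in> range g" using g by simp
  then obtain n where "g n = {m. m \<notin> g m}" by blast
  then show False by blast
qed

lemma ccc_compact:
  assumes ccc: "ccc_space (graph_topology X)" and met: "metrizable_space X"
  shows "compact_space X"
proof (rule ccontr)
  assume nc: "\<not> compact_space X"
  obtain Ms d where md: "Metric_space Ms d" "X = Metric_space.mtopology Ms d"
    using met unfolding metrizable_space_def by blast
  obtain S where S: "S \<subseteq> topspace X" "infinite S" "X derived_set_of S = {}"
    using nc Metric_space.compact_space_eq_Bolzano_Weierstrass[OF md(1)] md(2)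
      Metric_space.topspace_mtopology[OF md(1)] by auto
  have norm: "normal_space X" using met by (simp add: metrizable_imp_normal_space)
  have clS: "closedin X S" using S by (simp add: closedin_contains_derived_set)
  have disc: "subtopology X S = discrete_topology S"
    using S by (simp add: subtopology_eq_discrete_topology_eq)
  obtain \<sigma> :: "nat \<Rightarrow> _" where \<sigma>: "inj \<sigma>" "range \<sigma> \<subseteq> S"
    using infinite_countable_subset S(2) by blast
  have "\<forall>B. \<exists>g. continuous_map X euclideanreal g \<and> (\<forall>x\<in>S. g x = indicator (\<sigma> ` B) x)"
  proof
    fix B
    have cont: "continuous_map (subtopology X S) euclideanreal (indicator (\<sigma> ` B))"
      by (simp add: disc)
    have fim: "indicator (\<sigma> ` B) ` S \<subseteq> {0..1::real}" by (auto simp: indicator_def)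
    obtain g where "continuous_map X euclideanreal g" "\<And>x. x \<in> S \<Longrightarrow> g x = indicator (\<sigma> ` B) x"
      "g ` topspace X \<subseteq> {0..1}"
      by (rule Tietze_extension_closed_real_interval[OF norm clS cont fim]) auto
    then show "\<exists>g. continuous_map X euclideanreal g \<and> (\<forall>x\<in>S. g x = indicator (\<sigma> ` B) x)" by blast
  qed
  then obtain G where G: "\<And>B. continuous_map X euclideanreal (G B)"
    "\<And>B x. x \<in> S \<Longrightarrow> G B x = indicator (\<sigma> ` B) x" by metis
  have diff: "\<exists>x\<in>topspace X. 1 \<le> \<bar>G B x - G B' x\<bar>" if "B \<noteq> B'" for B B'
  proof -
    obtain n where "n \<in> B \<and> n \<notin> B' \<or> n \<in> B' \<and> n \<notin> B" using \<open>B \<noteq> B'\<close> by blast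
    then have "\<sigma> n \<in> \<sigma> ` B \<and> \<sigma> n \<notin> \<sigma> ` B' \<or> \<sigma> n \<in> \<sigma> ` B' \<and> \<sigma> n \<notin> \<sigma> ` B"
      using \<sigma>(1) by (auto simp: inj_image_mem_iff)
    moreover have "\<sigma> n \<in> S" using \<sigma>(2) by blast
    ultimately have "1 \<le> \<bar>G B (\<sigma> n) - G B' (\<sigma> n)\<bar>" using G(2) by (auto simp: indicator_def)
    then show ?thesis using \<open>\<sigma> n \<in> S\<close> S(1) by blast
  qed
  have "countable (range G)"
  proof (rule sep_countable[OF ccc, of 1])
    fix f g assume "f \<in> range G" "g \<in> range G" "f \<noteq> g"
    then obtain B B' where "f = G B" "g = G B'" "B \<noteq> B'" by blast
    then show "\<exists>x\<in>topspace X. 1 \<le> \<bar>f x - g x\<bar>" using diff by blast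
  qed (use G in auto)
  moreover have "inj G"
  proof (rule injI, rule ccontr)
    fix B B' assume "G B = G B'" "B \<noteq> B'"
    then show False using diff[of B B'] by auto
  qed
  ultimately have "countable (UNIV :: nat set set)" using countable_image_inj_on by blast
  then show False using uncountable_nat_sets by blast
qed

lemma (in Metric_space) compact_sc:
  assumes "compact_space mtopology"
  shows "second_countable mtopology"
proof -
  have "mtotally_bounded M"
    using assms compactin_imp_mtotally_bounded by (simp add: compact_space_def)
  then have "\<forall>n::nat. \<exists>K. finite K \<and> K \<subseteq> M \<and> M \<subseteq> (\<Union>x\<in>K. mball x (1 / Suc n))"
    unfolding mtotally_bounded_def by simp
  then obtain K where K: "\<And>n. finite (K n)" "\<And>n. K n \<subseteq> M" "\<And>n. M \<subseteq> (\<Union>x\<in>K n. mball x (1 / Suc n))"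
    by metis
  define B where "B = (\<Union>n. (\<lambda>c. mball c (1 / Suc n)) ` K n)"
  have "countable B" unfolding B_def using K(1) by (auto intro: countable_finite)
  moreover have "\<forall>V\<in>B. openin mtopology V" unfolding B_def by auto
  moreover have "\<exists>V\<in>B. x \<in> V \<and> V \<subseteq> U" if U: "openin mtopology U" "x \<in> U" for U x
  proof -
    obtain r where r: "r > 0" "mball x r \<subseteq> U" using U openin_mtopology by blast
    obtain n where "inverse (real (Suc n)) < r / 2"
      using reals_Archimedean[of "r/2"] r(1) by auto
    then have n: "1 / real (Suc n) < r / 2" by (simp add: inverse_eq_divide)
    have xM: "x \<in> M" using U openin_mtopology by blast
    then obtain c where c: "c \<in> K n" "x \<in> mball c (1 / Suc n)" using K(3)[of n] by blast
    have "mball c (1 / Suc n) \<subseteq> mball x r"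
    proof
      fix y assume y: "y \<in> mball c (1 / Suc n)"
      have "d x y \<le> d x c + d c y" using c y by (intro triangle) auto
      also have "\<dots> < r" using c y n by (auto simp: commute)
      finally show "y \<in> mball x r" using xM y by auto
    qed
    then show ?thesis using c r unfolding B_def by blast
  qed
  ultimately show ?thesis unfolding second_countable_def by blast
qed

lemma compact_metrizable_sc:
  assumes "compact_space X" "metrizable_space X"
  shows "second_countable X"
  using assms Metric_space.compact_sc unfolding metrizable_space_def by metis

lemma box_base:
  assumes "second_countable X"
  obtains BB where "countable BB" "\<And>B. B \<in> BB \<Longrightarrow> openin (prod_topology X euclideanreal) B"
    "\<And>G p. openin (prod_topology X euclideanreal) G \<Longrightarrow> p \<in> G \<Longrightarrow> \<exists>B\<in>BB. p \<in> B \<and> B \<subseteq> G"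
proof -
  obtain Bl where Bl: "countable Bl" "\<And>V. V \<in> Bl \<Longrightarrow> openin X V"
    "\<And>U x. openin X U \<Longrightarrow> x \<in> U \<Longrightarrow> \<exists>V\<in>Bl. x \<in> V \<and> V \<subseteq> U"
    using assms unfolding second_countable_def by metis
  define BB where "BB = (\<lambda>(V, a, b). V \<times> {a<..<b::real}) ` (Bl \<times> (\<rat> \<times> \<rat>))"
  have "countable BB" unfolding BB_def using Bl(1) countable_rat by blast
  moreover have "openin (prod_topology X euclideanreal) B" if "B \<in> BB" for B
    using that Bl(2) unfolding BB_def by (auto simp: openin_prod_Times_iff)
  moreover have "\<exists>B\<in>BB. p \<in> B \<and> B \<subseteq> G" if G: "openin (prod_topology X euclideanreal) G" "p \<in> G" for G p
  proof -
    obtain x y where p: "p = (x, y)" by force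
    obtain U W where UW: "openin X U" "openin euclideanreal W" "x \<in> U" "y \<in> W" "U \<times> W \<subseteq> G"
      using G p openin_prod_topology_alt by metis
    obtain V where V: "V \<in> Bl" "x \<in> V" "V \<subseteq> U" using Bl(3) UW by blast
    have "open W" using UW(2) by simp
    then obtain e where e: "e > 0" "\<And>z. \<bar>z - y\<bar> < e \<Longrightarrow> z \<in> W"
      using UW(4) unfolding open_real by blast
    obtain a where a: "a \<in> \<rat>" "y - e < a" "a < y" using Rats_dense_in_real[of "y - e" y] e by auto
    obtain b where b: "b \<in> \<rat>" "y < b" "b < y + e" using Rats_dense_in_real[of y "y + e"] e by auto
    have "{a<..<b} \<subseteq> W" using a b e by auto
    then have S1: "V \<times> {a<..<b} \<subseteq> G" using V UW by blast
    have S2: "V \<times> {a<..<b} \<in> BB" unfolding BB_def using V a b by force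
    have S3: "p \<in> V \<times> {a<..<b}" using p V a b by auto
    show ?thesis
    proof (rule bexI[where x="V \<times> {a<..<b}"])
      show "p \<in> V \<times> {a<..<b} \<and> V \<times> {a<..<b} \<subseteq> G" using S3 S1 by (rule conjI)
      show "V \<times> {a<..<b} \<in> BB" by (rule S2)
    qed
  qed
  ultimately show ?thesis using that by blast
qed

lemma cm_imp_sc_graph:
  assumes cpt: "compact_space X" and met: "metrizable_space X"
  shows "second_countable (graph_topology X)"
proof -
  obtain BB where BB: "countable BB" "\<And>B. B \<in> BB \<Longrightarrow> openin (prod_topology X euclideanreal) B"
    "\<And>G p. openin (prod_topology X euclideanreal) G \<Longrightarrow> p \<in> G \<Longrightarrow> \<exists>B\<in>BB. p \<in> B \<and> B \<subseteq> G"
    using box_base[OF compact_metrizable_sc[OF assms]] by metis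
  define \<B> where "\<B> = (\<lambda>F. FG X (\<Union>F)) ` {F. finite F \<and> F \<subseteq> BB}"
  have "countable \<B>" unfolding \<B>_def using countable_Collect_finite_subset[OF BB(1)] by blast
  moreover have "\<forall>V\<in>\<B>. openin (graph_topology X) V"
    unfolding \<B>_def using BB(2) by (auto intro!: FG_open)
  moreover have "\<exists>V\<in>\<B>. h \<in> V \<and> V \<subseteq> U" if U: "openin (graph_topology X) U" "h \<in> U" for U h
  proof -
    obtain G where G: "openin (prod_topology X euclideanreal) G" "h \<in> FG X G" "FG X G \<subseteq> U"
      using gt_base[OF U] by blast
    then have hC: "h \<in> CX X" and hG: "h \<subseteq> G" by (auto simp: FG_def)
    then obtain f where f: "continuous_map X euclideanreal f" "h = fgraph X f" by (auto simp: CX_def)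
    have heq: "h = (\<lambda>x. (x, f x)) ` topspace X" using f(2) by (auto simp: fgraph_def)
    have contp: "continuous_map X (prod_topology X euclideanreal) (\<lambda>x. (x, f x))"
      using f(1) by (intro continuous_map_pairedI) (auto simp: continuous_map_id[unfolded id_def])
    have "compactin X (topspace X)" using cpt by (simp add: compact_space_def)
    then have "compactin (prod_topology X euclideanreal) ((\<lambda>x. (x, f x)) ` topspace X)"
      using contp by (rule image_compactin)
    then have cmp: "compactin (prod_topology X euclideanreal) h" using heq by simp
    have cov: "h \<subseteq> \<Union>{B \<in> BB. B \<subseteq> G}" using hG BB(3)[OF G(1)] by blast
    have opn: "\<forall>B\<in>{B \<in> BB. B \<subseteq> G}. openin (prod_topology X euclideanreal) B" using BB(2) by blast
    have "\<exists>F. finite F \<and> F \<subseteq> {B \<in> BB. B \<subseteq> G} \<and> h \<subseteq> \<Union>F"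
      using cmp[unfolded compactin_def, THEN conjunct2, rule_format, OF conjI[OF opn cov]] .
    then obtain F where F: "finite F" "F \<subseteq> {B \<in> BB. B \<subseteq> G}" "h \<subseteq> \<Union>F"
      by (elim exE conjE)
    have "FG X (\<Union>F) \<in> \<B>" unfolding \<B>_def using F by blast
    moreover have "h \<in> FG X (\<Union>F)" using hC F by (auto simp: FG_def)
    moreover have "FG X (\<Union>F) \<subseteq> U" using FG_mono[of "\<Union>F" G X] F G(3) by blast
    ultimately show ?thesis by blast
  qed
  ultimately show ?thesis unfolding second_countable_def by blast
qed

lemma sc_network: "second_countable T \<Longrightarrow> has_countable_network T"
  unfolding second_countable_def has_countable_network_def using openin_subset by metis

lemma network_separable:
  assumes "has_countable_network T"
  shows "separable_space T"
proof -
  obtain \<N> where N: "countable \<N>" "\<forall>N\<in>\<N>. N \<subseteq> topspace T"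
    "\<forall>U x. openin T U \<and> x \<in> U \<longrightarrow> (\<exists>N\<in>\<N>. x \<in> N \<and> N \<subseteq> U)"
    using assms unfolding has_countable_network_def by blast
  define C where "C = (\<lambda>N. SOME x. x \<in> N) ` {N \<in> \<N>. N \<noteq> {}}"
  have "countable C" unfolding C_def using N(1) by auto
  moreover have "(SOME x. x \<in> N) \<in> topspace T" if "N \<in> \<N>" "N \<noteq> {}" for N
    using N(2) that some_in_eq by blast
  then have "C \<subseteq> topspace T" unfolding C_def by blast
  moreover have "T closure_of C = topspace T"
  proof
    show "T closure_of C \<subseteq> topspace T" by (rule closure_of_subset_topspace)
    show "topspace T \<subseteq> T closure_of C"
    proof
      fix x assume x: "x \<in> topspace T"
      show "x \<in> T closure_of C"
        unfolding in_closure_of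
      proof (intro conjI allI impI)
        fix U assume "x \<in> U \<and> openin T U"
        then obtain N where "N \<in> \<N>" "x \<in> N" "N \<subseteq> U" using N(3) by blast
        moreover have "(SOME y. y \<in> N) \<in> N" using \<open>x \<in> N\<close> by (rule someI)
        ultimately show "\<exists>y. y \<in> C \<and> y \<in> U" unfolding C_def by blast
      qed (rule x)
    qed
  qed
  ultimately show ?thesis unfolding separable_space_def by blast
qed

lemma separable_ccc:
  assumes "separable_space T"
  shows "ccc_space T"
  unfolding ccc_space_def
proof (intro allI impI)
  fix \<U> assume U: "(\<forall>U\<in>\<U>. openin T U \<and> U \<noteq> {}) \<and> pairwise disjnt \<U>"
  obtain C where C: "countable C" "C \<subseteq> topspace T" "T closure_of C = topspace T"
    using assms unfolding separable_space_def by blast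
  have "\<exists>c. c \<in> C \<and> c \<in> U" if "U \<in> \<U>" for U
  proof -
    have ne: "U \<noteq> {}" and op: "openin T U" using U that by simp_all
    obtain x where x: "x \<in> U" using ne by blast
    then have "x \<in> topspace T" using op openin_subset by blast
    then have "x \<in> T closure_of C" using C(3) by simp
    then show ?thesis using x op unfolding in_closure_of by blast
  qed
  then obtain c where c: "\<And>U. U \<in> \<U> \<Longrightarrow> c U \<in> C \<and> c U \<in> U" by metis
  have "inj_on c \<U>"
  proof (rule inj_onI, rule ccontr)
    fix U V assume "U \<in> \<U>" "V \<in> \<U>" "c U = c V" "U \<noteq> V"
    then show False using U c[of U] c[of V] unfolding pairwise_def disjnt_def by auto
  qed
  moreover have "countable (c ` \<U>)" using c C(1) by (auto intro: countable_subset)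
  ultimately show "countable \<U>" using countable_image_inj_on by blast
qed

theorem proposition2p2:
  fixes X :: "'a topology"
  assumes "tychonoff_space X"
  shows "(second_countable (graph_topology X) \<longleftrightarrow> compact_space X \<and> metrizable_space X)
       \<and> (has_countable_network (graph_topology X) \<longleftrightarrow> compact_space X \<and> metrizable_space X)
       \<and> (separable_space (graph_topology X) \<longleftrightarrow> compact_space X \<and> metrizable_space X)
       \<and> (ccc_space (graph_topology X) \<longleftrightarrow> compact_space X \<and> metrizable_space X)"
proof -
  have cr: "completely_regular_space X" and t1: "t1_space X"
    using assms unfolding tychonoff_space_def by auto
  have c5: "compact_space X \<and> metrizable_space X" if ccc: "ccc_space (graph_topology X)"
  proof -
    obtain M where M: "countable M" "\<And>f. f \<in> M \<Longrightarrow> continuous_map X euclideanreal f"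
      "\<And>g. continuous_map X euclideanreal g \<Longrightarrow> \<exists>f\<in>M. \<forall>x\<in>topspace X. \<bar>f x - g x\<bar> < 1/3"
      using exists_net[OF ccc] by metis
    have met: "metrizable_space X" using net_metrizable[OF cr t1 M] .
    then show ?thesis using ccc_compact[OF ccc met] by blast
  qed
  have c1: "second_countable (graph_topology X)" if "compact_space X \<and> metrizable_space X"
    using cm_imp_sc_graph that by blast
  show ?thesis
    using c1 c5 sc_network network_separable separable_ccc by blast
qed

end
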